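(* Let $L,L'$ be finite simplicial complexes, $\varphi: L\to L'$ a surjective simplicial finite-fibration, and $n\ge2$. (i) If there is a simplicial map $\omega: L'\to L$ with $\varphi\circ\omega\sim 1_{L'}$ (a right strong equivalence), then $\mathrm{TC}_n(\varphi)=\mathrm{TC}_n(L')$. (ii) If there is a simplicial map $\gamma: L'\to L$ with $\gamma\circ\varphi\sim 1_L$ (a left strong equivalence), then $\mathrm{TC}_n(\varphi)=\mathrm{TC}_n(L)$. (iii) If $\varphi$ is a strong equivalence, then $\mathrm{TC}_n(\varphi)=\mathrm{TC}_n(L)=\mathrm{TC}_n(L')$.
   Context: Simplicial complexes are abstract and edge-path connected; $K^n$ is the $n$-fold categorical product (vertex set $\mathrm{VX}(K)^n$; a set of vertices is a simplex iff each coordinate projection is a simplex). Simplicial maps $f,g: K\to K'$ are contiguous if $f(\sigma)\cup g(\sigma)$ is a simplex for every simplex $\sigma$; $f\sim g$ if joined by a finite chain of contiguous simplicial maps. A strong equivalence $f: K\to K'$ is a simplicial map admitting a simplicial $g: K'\to K$ with $f\circ g\sim1_{K'}$ and $g\circ f\sim 1_K$. $\mathrm{SD}(\varphi_1,\dots,\varphi_m)$ for simplicial maps $K\to K'$ is the least $k\ge0$ such that $K$ is a union of subcomplexes $K_0,\dots,K_k$ with $\varphi_i|_{K_j}\sim\varphi_l|_{K_j}$ for all $i,l,j$. With $p_i: K^n\to K$ the projections, $\mathrm{TC}_n(K)=\mathrm{SD}(p_1,\dots,p_n)$ and, for surjective $\varphi: L\to L'$, $\mathrm{TC}_n(\varphi)=\mathrm{SD}(\varphi\circ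 p_1,\dots,\varphi\circ p_n)$ with $p_i: L^n\to L$. $I_m$ is the complex with vertices $0,\dots,m$ and edges $\{i,i+1\}$; $\varphi: L\to L'$ is a simplicial finite-fibration if for every finite complex $N$, $m\ge1$, inclusion $i: N\times\{0\}\to N\times I_m$ and simplicial $g: N\times\{0\}\to L$, $G: N\times I_m\to L'$ with $\varphi\circ g=G\circ i$, there is simplicial $\widetilde G$ with $\widetilde G\circ i=g$, $\varphi\circ\widetilde G=G$. *)

theory Defs
  imports Main
begin

definition VX :: "'a set set \<Rightarrow> 'a set" where
  "VX K = \<Union>K"

definition raw_complex :: "'a set set \<Rightarrow> bool" where
  "raw_complex K \<longleftrightarrow>
     (\<forall>\<sigma>\<in>K. finite \<sigma> \<and> \<sigma> \<noteq> {}) \<and>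
     (\<forall>\<sigma>\<in>K. \<forall>\<tau>. \<tau> \<subseteq> \<sigma> \<and> \<tau> \<noteq> {} \<longrightarrow> \<tau> \<in> K)"

definition edge_path_connected :: "'a set set \<Rightarrow> bool" where
  "edge_path_connected K \<longleftrightarrow>
     (\<forall>v\<in>VX K. \<forall>w\<in>VX K. (\<lambda>x y. {x, y} \<in> K)\<^sup>*\<^sup>* v w)"

text \<open>Standing assumption: simplicial complexes are (nonempty and) edge-path connected.\<close>
definition complex :: "'a set set \<Rightarrow> bool" where
  "complex K \<longleftrightarrow> raw_complex K \<and> K \<noteq> {} \<and> edge_path_connected K"

definition finite_complex :: "'a set set \<Rightarrow> bool" where
  "finite_complex K \<longleftrightarrow> complex K \<and> finite (VX K)"

definition subcomplex :: "'a set set \<Rightarrow> 'a set set \<Rightarrow> bool" where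
  "subcomplex M K \<longleftrightarrow> M \<subseteq> K \<and> raw_complex M"

definition simp_map :: "'a set set \<Rightarrow> 'b set set \<Rightarrow> ('a \<Rightarrow> 'b) \<Rightarrow> bool" where
  "simp_map K K' f \<longleftrightarrow> f ` VX K \<subseteq> VX K' \<and> (\<forall>\<sigma>\<in>K. f ` \<sigma> \<in> K')"

definition contiguous :: "'a set set \<Rightarrow> 'b set set \<Rightarrow> ('a \<Rightarrow> 'b) \<Rightarrow> ('a \<Rightarrow> 'b) \<Rightarrow> bool" where
  "contiguous K K' f g \<longleftrightarrow> simp_map K K' f \<and> simp_map K K' g \<and>
     (\<forall>\<sigma>\<in>K. f ` \<sigma> \<union> g ` \<sigma> \<in> K')"

definition simp_homot :: "'a set set \<Rightarrow> 'b set set \<Rightarrow> ('a \<Rightarrow> 'b) \<Rightarrow> ('a \<Rightarrow> 'b) \<Rightarrow> bool" where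
  "simp_homot K K' f g \<longleftrightarrow> simp_map K K' f \<and> (contiguous K K')\<^sup>*\<^sup>* f g"

definition strong_equivalence :: "'a set set \<Rightarrow> 'b set set \<Rightarrow> ('a \<Rightarrow> 'b) \<Rightarrow> bool" where
  "strong_equivalence K K' f \<longleftrightarrow> simp_map K K' f \<and>
     (\<exists>g. simp_map K' K g \<and> simp_homot K' K' (f \<circ> g) id \<and> simp_homot K K (g \<circ> f) id)"

definition SD :: "'a set set \<Rightarrow> 'b set set \<Rightarrow> ('a \<Rightarrow> 'b) list \<Rightarrow> nat" where
  "SD K K' phis = (LEAST k. \<exists>Ks :: nat \<Rightarrow> 'a set set.
      (\<forall>j\<le>k. subcomplex (Ks j) K) \<and> K = (\<Union>j\<le>k. Ks j) \<and>
      (\<forall>j\<le>k. \<forall>i<length phis. \<forall>l<length phis. simp_homot (Ks j) K' (phis ! i) (phis ! l)))"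

text \<open>n-fold categorical product K^n: vertices are lists of length n of vertices of K;
  a nonempty finite set of such lists is a simplex iff each coordinate projection is.\<close>
definition power_cx :: "'a set set \<Rightarrow> nat \<Rightarrow> 'a list set set" where
  "power_cx K n = {\<sigma>. finite \<sigma> \<and> \<sigma> \<noteq> {} \<and> (\<forall>x\<in>\<sigma>. length x = n) \<and>
                      (\<forall>i<n. (\<lambda>x. x ! i) ` \<sigma> \<in> K)}"

definition TC :: "nat \<Rightarrow> 'a set set \<Rightarrow> nat" where
  "TC n K = SD (power_cx K n) K (map (\<lambda>i. \<lambda>x. x ! i) [0..<n])"

definition TC_map :: "nat \<Rightarrow> 'a set set \<Rightarrow> 'b set set \<Rightarrow> ('a \<Rightarrow> 'b) \<Rightarrow> nat" where
  "TC_map n L L' \<phi> = SD (power_cx L n) L' (map (\<lambda>i. \<lambda>x. \<phi> (x ! i)) [0..<n])"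

definition prod_cx :: "'a set set \<Rightarrow> 'b set set \<Rightarrow> ('a \<times> 'b) set set" where
  "prod_cx K M = {\<sigma>. finite \<sigma> \<and> \<sigma> \<noteq> {} \<and> fst ` \<sigma> \<in> K \<and> snd ` \<sigma> \<in> M}"

definition Icx :: "nat \<Rightarrow> nat set set" where
  "Icx m = {{i} | i. i \<le> m} \<union> {{i, Suc i} | i. i < m}"

text \<open>Test complexes N are taken with vertices in nat
  (every finite complex is isomorphic to one on nat). N \<times> {0} is realised as
  prod_cx N {{0}}, and the inclusion into N \<times> I_m is the identity on pairs.\<close>
definition finite_fibration :: "'a set set \<Rightarrow> 'b set set \<Rightarrow> ('a \<Rightarrow> 'b) \<Rightarrow> bool" where
  "finite_fibration L L' \<phi> \<longleftrightarrow>
     (\<forall>(N :: nat set set) (m :: nat) (g :: nat \<times> nat \<Rightarrow> 'a) (G :: nat \<times> nat \<Rightarrow> 'b).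
        finite_complex N \<and> m \<ge> 1 \<and>
        simp_map (prod_cx N {{0}}) L g \<and> simp_map (prod_cx N (Icx m)) L' G \<and>
        (\<forall>v\<in>VX (prod_cx N {{0}}). \<phi> (g v) = G v)
        \<longrightarrow> (\<exists>G' :: nat \<times> nat \<Rightarrow> 'a. simp_map (prod_cx N (Icx m)) L G' \<and>
               (\<forall>v\<in>VX (prod_cx N {{0}}). G' v = g v) \<and>
               (\<forall>v\<in>VX (prod_cx N (Icx m)). \<phi> (G' v) = G v)))"

end

theory Submission
  imports Defs
begin

definition cov :: "'a set set \<Rightarrow> 'b set set \<Rightarrow> ('a \<Rightarrow> 'b) list \<Rightarrow> nat \<Rightarrow> bool" where
  "cov K K' phis k = (\<exists>Ks :: nat \<Rightarrow> 'a set set.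
      (\<forall>j\<le>k. subcomplex (Ks j) K) \<and> K = (\<Union>j\<le>k. Ks j) \<and>
      (\<forall>j\<le>k. \<forall>i<length phis. \<forall>l<length phis. simp_homot (Ks j) K' (phis ! i) (phis ! l)))"

lemma SD_cov: "SD K K' phis = (LEAST k. cov K K' phis k)"
  by (simp add: SD_def cov_def)

lemma sm_simp: "(\<forall>\<sigma>\<in>K. f ` \<sigma> \<in> K') \<Longrightarrow> simp_map K K' f"
  unfolding simp_map_def VX_def by blast

lemma sm_sub: "simp_map A B f \<Longrightarrow> N \<subseteq> A \<Longrightarrow> simp_map N B f"
  unfolding simp_map_def VX_def by blast

lemma sm_comp: "simp_map A B h \<Longrightarrow> simp_map B C f \<Longrightarrow> simp_map A C (f \<circ> h)"
  unfolding simp_map_def image_comp[symmetric] by blast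

lemma contig_pre: "simp_map A B h \<Longrightarrow> contiguous B C f g \<Longrightarrow> contiguous A C (f \<circ> h) (g \<circ> h)"
  unfolding contiguous_def using sm_comp
  by (metis image_comp simp_map_def)

lemma contig_post: "simp_map B C k \<Longrightarrow> contiguous A B f g \<Longrightarrow> contiguous A C (k \<circ> f) (k \<circ> g)"
  unfolding contiguous_def using sm_comp
  by (metis image_Un image_comp simp_map_def)

lemma contig_sym: "contiguous K K' f g \<Longrightarrow> contiguous K K' g f"
  by (auto simp: contiguous_def Un_commute)

lemma rt_pre: "(contiguous B C)\<^sup>*\<^sup>* f g \<Longrightarrow> simp_map A B h \<Longrightarrow> (contiguous A C)\<^sup>*\<^sup>* (f \<circ> h) (g \<circ> h)"
  by (induction rule: rtranclp_induct) (auto intro: rtranclp.rtrancl_into_rtrancl contig_pre)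

lemma rt_post: "(contiguous A B)\<^sup>*\<^sup>* f g \<Longrightarrow> simp_map B C k \<Longrightarrow> (contiguous A C)\<^sup>*\<^sup>* (k \<circ> f) (k \<circ> g)"
  by (induction rule: rtranclp_induct) (auto intro: rtranclp.rtrancl_into_rtrancl contig_post)

lemma homot_pre: "simp_map A B h \<Longrightarrow> simp_homot B C f g \<Longrightarrow> simp_homot A C (f \<circ> h) (g \<circ> h)"
  unfolding simp_homot_def using rt_pre sm_comp by blast

lemma homot_post: "simp_map B C k \<Longrightarrow> simp_homot A B f g \<Longrightarrow> simp_homot A C (k \<circ> f) (k \<circ> g)"
  unfolding simp_homot_def using rt_post sm_comp by blast

lemma rt_end: "(contiguous K K')\<^sup>*\<^sup>* f g \<Longrightarrow> simp_map K K' f \<Longrightarrow> simp_map K K' g"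
  by (induction rule: rtranclp_induct) (auto simp: contiguous_def)

lemma homot_sym: "simp_homot K K' f g \<Longrightarrow> simp_homot K K' g f"
proof -
  assume a: "simp_homot K K' f g"
  have "(contiguous K K')\<^sup>*\<^sup>* g f"
  proof -
    have "((contiguous K K')\<^sup>*\<^sup>*)\<inverse>\<inverse> g f" using a by (simp add: simp_homot_def)
    hence "((contiguous K K')\<inverse>\<inverse>)\<^sup>*\<^sup>* g f" by (simp add: rtranclp_conversep)
    moreover have "(contiguous K K')\<inverse>\<inverse> = contiguous K K'" using contig_sym by blast
    ultimately show ?thesis by simp
  qed
  moreover have "simp_map K K' g" using a rt_end simp_homot_def by blast
  ultimately show ?thesis by (simp add: simp_homot_def)
qed

lemma homot_trans: "simp_homot K K' f g \<Longrightarrow> simp_homot K K' g h \<Longrightarrow> simp_homot K K' f h"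
  unfolding simp_homot_def by (meson rtranclp_trans)

lemma homot_agree1: "simp_homot K K' f g \<Longrightarrow> (\<forall>x\<in>VX K. f' x = f x) \<Longrightarrow> simp_homot K K' f' g"
proof -
  assume a: "simp_homot K K' f g" and e: "\<forall>x\<in>VX K. f' x = f x"
  have sf: "simp_map K K' f" using a simp_homot_def by blast
  have im: "\<And>\<sigma>. \<sigma> \<in> K \<Longrightarrow> f' ` \<sigma> = f ` \<sigma>" using e unfolding VX_def by (auto intro: image_cong)
  have im2: "f' ` VX K = f ` VX K" using e by (auto intro: image_cong)
  have sf': "simp_map K K' f'" using sf im im2 by (simp add: simp_map_def)
  have "contiguous K K' f' f" using sf sf' im by (simp add: contiguous_def simp_map_def)
  thus ?thesis using a sf' by (auto simp: simp_homot_def intro: converse_rtranclp_into_rtranclp)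
qed

lemma homot_agree: "simp_homot K K' f g \<Longrightarrow> (\<forall>x\<in>VX K. f' x = f x \<and> g' x = g x) \<Longrightarrow> simp_homot K K' f' g'"
proof -
  assume a: "simp_homot K K' f g" and e: "\<forall>x\<in>VX K. f' x = f x \<and> g' x = g x"
  have "simp_homot K K' f' g" using a e homot_agree1[of K K' f g f'] by blast
  hence "simp_homot K K' g f'" by (rule homot_sym)
  hence "simp_homot K K' g' f'" using e homot_agree1[of K K' g f' g'] by blast
  thus ?thesis by (rule homot_sym)
qed

lemma raw_power: "raw_complex K \<Longrightarrow> raw_complex (power_cx K n)"
proof -
  assume r: "raw_complex K"
  show ?thesis unfolding raw_complex_def
  proof (intro conjI ballI allI impI)
    fix \<sigma> assume "\<sigma> \<in> power_cx K n"
    thus "finite \<sigma>" by (simp add: power_cx_def)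
  next
    fix \<sigma> assume "\<sigma> \<in> power_cx K n"
    thus "\<sigma> \<noteq> {}" by (simp add: power_cx_def)
  next
    fix \<sigma> \<tau> assume s: "\<sigma> \<in> power_cx K n" and t: "\<tau> \<subseteq> \<sigma> \<and> \<tau> \<noteq> {}"
    have "(\<lambda>x. x ! i) ` \<tau> \<in> K" if i: "i < n" for i
    proof -
      have "(\<lambda>x. x ! i) ` \<sigma> \<in> K" using s i by (simp add: power_cx_def)
      moreover have "(\<lambda>x. x ! i) ` \<tau> \<subseteq> (\<lambda>x. x ! i) ` \<sigma>" using t by (rule image_mono[OF conjunct1])
      moreover have "(\<lambda>x. x ! i) ` \<tau> \<noteq> {}" using t by simp
      ultimately show ?thesis using r unfolding raw_complex_def by blast
    qed
    moreover have "finite \<tau>" using s t finite_subset unfolding power_cx_def by blast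
    ultimately show "\<tau> \<in> power_cx K n" using s t unfolding power_cx_def by blast
  qed
qed

lemma proj_sm: "i < n \<Longrightarrow> simp_map (power_cx K n) K (\<lambda>x. x ! i)"
  by (rule sm_simp) (auto simp: power_cx_def)

lemma VX_power_len: "x \<in> VX N \<Longrightarrow> subcomplex N (power_cx K n) \<Longrightarrow> length x = n"
  unfolding VX_def subcomplex_def power_cx_def by blast

lemma map_sm: "simp_map L' L \<omega> \<Longrightarrow> simp_map (power_cx L' n) (power_cx L n) (map \<omega>)"
proof (rule sm_simp, intro ballI)
  fix \<sigma> assume w: "simp_map L' L \<omega>" and s: "\<sigma> \<in> power_cx L' n"
  have "\<And>i. i < n \<Longrightarrow> (\<lambda>x. x ! i) ` (map \<omega> ` \<sigma>) = \<omega> ` ((\<lambda>x. x ! i) ` \<sigma>)"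
    using s unfolding power_cx_def by (auto simp: image_image intro!: image_cong)
  moreover have "\<And>i. i < n \<Longrightarrow> \<omega> ` ((\<lambda>x. x ! i) ` \<sigma>) \<in> L"
    using s w unfolding power_cx_def simp_map_def by blast
  ultimately show "map \<omega> ` \<sigma> \<in> power_cx L n" using s unfolding power_cx_def by auto
qed

lemma transfer:
  assumes rawA: "raw_complex A" and h: "simp_map A B h" and len: "length gs = length fs"
    and H: "\<And>M N i l. subcomplex M B \<Longrightarrow> subcomplex N A \<Longrightarrow> simp_map N M h \<Longrightarrow>
         i < length fs \<Longrightarrow> l < length fs \<Longrightarrow> simp_homot M C (fs!i) (fs!l) \<Longrightarrow> simp_homot N D (gs!i) (gs!l)"
    and c: "cov B C fs k"
  shows "cov A D gs k"
proof -
  from c obtain Ks where sub: "\<forall>j\<le>k. subcomplex (Ks j) B" and un: "B = (\<Union>j\<le>k. Ks j)"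
    and hom: "\<forall>j\<le>k. \<forall>i<length fs. \<forall>l<length fs. simp_homot (Ks j) C (fs!i) (fs!l)"
    unfolding cov_def by blast
  define Ns where "Ns j = {\<sigma>\<in>A. h`\<sigma> \<in> Ks j}" for j
  have subN: "subcomplex (Ns j) A" if "j \<le> k" for j
  proof -
    have r: "raw_complex (Ks j)" using sub that subcomplex_def by blast
    show ?thesis unfolding subcomplex_def raw_complex_def
    proof (intro conjI ballI allI impI)
      show "Ns j \<subseteq> A" by (auto simp: Ns_def)
    next
      fix \<sigma> assume "\<sigma> \<in> Ns j"
      thus "finite \<sigma>" using rawA unfolding raw_complex_def Ns_def by blast
    next
      fix \<sigma> assume "\<sigma> \<in> Ns j"
      thus "\<sigma> \<noteq> {}" using rawA unfolding raw_complex_def Ns_def by blast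
    next
      fix \<sigma> \<tau> assume s: "\<sigma> \<in> Ns j" and t: "\<tau> \<subseteq> \<sigma> \<and> \<tau> \<noteq> {}"
      have tA: "\<tau> \<in> A" using rawA s t unfolding raw_complex_def Ns_def by blast
      have "h ` \<sigma> \<in> Ks j" using s Ns_def by blast
      moreover have "h ` \<tau> \<subseteq> h ` \<sigma>" using t by (rule image_mono[OF conjunct1])
      moreover have "h ` \<tau> \<noteq> {}" using t by simp
      ultimately have "h ` \<tau> \<in> Ks j" using r unfolding raw_complex_def by blast
      thus "\<tau> \<in> Ns j" using tA Ns_def by blast
    qed
  qed
  have smN: "simp_map (Ns j) (Ks j) h" for j
    by (rule sm_simp) (simp add: Ns_def)
  have unN: "A = (\<Union>j\<le>k. Ns j)"
  proof
    show "A \<subseteq> (\<Union>j\<le>k. Ns j)"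
    proof
      fix \<sigma> assume "\<sigma> \<in> A"
      hence "h ` \<sigma> \<in> B" using h unfolding simp_map_def by blast
      hence "h ` \<sigma> \<in> (\<Union>j\<le>k. Ks j)" using un by simp
      then obtain j where "j \<le> k" "h ` \<sigma> \<in> Ks j" by blast
      thus "\<sigma> \<in> (\<Union>j\<le>k. Ns j)" using \<open>\<sigma> \<in> A\<close> by (auto simp: Ns_def)
    qed
  qed (auto simp: Ns_def)
  have "\<forall>j\<le>k. \<forall>i<length gs. \<forall>l<length gs. simp_homot (Ns j) D (gs!i) (gs!l)"
  proof (intro allI impI)
    fix j i l assume j: "j \<le> k" and i: "i < length gs" and l: "l < length gs"
    have "subcomplex (Ks j) B" using sub j by blast
    moreover have "simp_homot (Ks j) C (fs!i) (fs!l)" using hom j i l len by simp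
    ultimately show "simp_homot (Ns j) D (gs!i) (gs!l)"
      using H[of "Ks j" "Ns j" i l] subN[OF j] smN i l len by simp
  qed
  thus ?thesis unfolding cov_def using subN unN by blast
qed

lemma SD_eq: "(\<And>k. cov A C fs k = cov B D gs k) \<Longrightarrow> SD A C fs = SD B D gs"
  by (simp add: SD_cov)

lemma fc_raw: "finite_complex K \<Longrightarrow> raw_complex K"
  by (simp add: finite_complex_def complex_def)

lemma dir_a:
  fixes L :: "'a set set" and L' :: "'b set set"
  assumes rL: "raw_complex L" and phi: "simp_map L L' \<phi>"
    and c: "cov (power_cx L' n) L' (map (\<lambda>i. \<lambda>x. x ! i) [0..<n]) k"
  shows "cov (power_cx L n) L' (map (\<lambda>i. \<lambda>x. \<phi> (x ! i)) [0..<n]) k"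
proof (rule transfer[OF raw_power[OF rL] map_sm[OF phi] _ _ c])
  fix M N i l
  assume sN: "subcomplex N (power_cx L n)" and smN: "simp_map N M (map \<phi>)"
    and i: "i < length (map (\<lambda>i. \<lambda>x. x ! i) [0..<n])" and l: "l < length (map (\<lambda>i. \<lambda>x. x ! i) [0..<n])"
    and hm: "simp_homot M L' (map (\<lambda>i. \<lambda>x. x ! i) [0..<n] ! i) (map (\<lambda>i. \<lambda>x. x ! i) [0..<n] ! l)"
  have "simp_homot N L' ((\<lambda>x. x ! i) \<circ> map \<phi>) ((\<lambda>x. x ! l) \<circ> map \<phi>)"
    using homot_pre[OF smN] hm i l by auto
  moreover have "\<forall>x\<in>VX N. (\<lambda>x. \<phi> (x ! i)) x = ((\<lambda>x. x ! i) \<circ> map \<phi>) x \<and> (\<lambda>x. \<phi> (x ! l)) x = ((\<lambda>x. x ! l) \<circ> map \<phi>) x"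
    using VX_power_len[OF _ sN] i l by auto
  ultimately have "simp_homot N L' (\<lambda>x. \<phi> (x ! i)) (\<lambda>x. \<phi> (x ! l))" by (rule homot_agree)
  thus "simp_homot N L' (map (\<lambda>i. \<lambda>x. \<phi> (x ! i)) [0..<n] ! i) (map (\<lambda>i. \<lambda>x. \<phi> (x ! i)) [0..<n] ! l)"
    using i l by simp
qed simp


lemma dir_b:
  fixes L :: "'a set set" and L' :: "'b set set"
  assumes rL': "raw_complex L'" and w: "simp_map L' L \<omega>"
    and hw: "simp_homot L' L' (\<phi> \<circ> \<omega>) id"
    and c: "cov (power_cx L n) L' (map (\<lambda>i. \<lambda>x. \<phi> (x ! i)) [0..<n]) k"
  shows "cov (power_cx L' n) L' (map (\<lambda>i. \<lambda>x. x ! i) [0..<n]) k"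
proof (rule transfer[OF raw_power[OF rL'] map_sm[OF w] _ _ c])
  fix M N i l
  assume sN: "subcomplex N (power_cx L' n)" and smN: "simp_map N M (map \<omega>)"
    and i: "i < length (map (\<lambda>i. \<lambda>x. \<phi> (x ! i)) [0..<n])" and l: "l < length (map (\<lambda>i. \<lambda>x. \<phi> (x ! i)) [0..<n])"
    and hm: "simp_homot M L' (map (\<lambda>i. \<lambda>x. \<phi> (x ! i)) [0..<n] ! i) (map (\<lambda>i. \<lambda>x. \<phi> (x ! i)) [0..<n] ! l)"
  have "simp_homot N L' ((\<lambda>x. \<phi> (x ! i)) \<circ> map \<omega>) ((\<lambda>x. \<phi> (x ! l)) \<circ> map \<omega>)"
    using homot_pre[OF smN] hm i l by auto
  moreover have "\<forall>x\<in>VX N. (\<lambda>x. \<phi> (\<omega> (x ! i))) x = ((\<lambda>x. \<phi> (x ! i)) \<circ> map \<omega>) x \<and> (\<lambda>x. \<phi> (\<omega> (x ! l))) x = ((\<lambda>x. \<phi> (x ! l)) \<circ> map \<omega>) x"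
    using VX_power_len[OF _ sN] i l by auto
  ultimately have h1: "simp_homot N L' (\<lambda>x. \<phi> (\<omega> (x ! i))) (\<lambda>x. \<phi> (\<omega> (x ! l)))" by (rule homot_agree)
  have h2: "simp_homot N L' (\<lambda>x. \<phi> (\<omega> (x ! j))) (\<lambda>x. x ! j)" if "j < n" for j
  proof -
    have "simp_map N L' (\<lambda>x. x ! j)" using sm_sub[OF proj_sm[OF that]] sN subcomplex_def by blast
    from homot_pre[OF this hw] show ?thesis by (simp add: comp_def)
  qed
  have "simp_homot N L' (\<lambda>x. x ! i) (\<lambda>x. x ! l)"
    using homot_trans[OF homot_trans[OF homot_sym[OF h2] h1] h2] i l by simp
  thus "simp_homot N L' (map (\<lambda>i. \<lambda>x. x ! i) [0..<n] ! i) (map (\<lambda>i. \<lambda>x. x ! i) [0..<n] ! l)"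
    using i l by simp
qed simp

lemma id_sm: "simp_map K K id"
  by (rule sm_simp) simp

lemma dir_c:
  fixes L :: "'a set set" and L' :: "'b set set"
  assumes rL: "raw_complex L" and phi: "simp_map L L' \<phi>"
    and c: "cov (power_cx L n) L (map (\<lambda>i. \<lambda>x. x ! i) [0..<n]) k"
  shows "cov (power_cx L n) L' (map (\<lambda>i. \<lambda>x. \<phi> (x ! i)) [0..<n]) k"
proof (rule transfer[OF raw_power[OF rL] id_sm _ _ c])
  fix M N i l
  assume smN: "simp_map N M id"
    and i: "i < length (map (\<lambda>i. \<lambda>x. x ! i) [0..<n])" and l: "l < length (map (\<lambda>i. \<lambda>x. x ! i) [0..<n])"
    and hm: "simp_homot M L (map (\<lambda>i. \<lambda>x. x ! i) [0..<n] ! i) (map (\<lambda>i. \<lambda>x. x ! i) [0..<n] ! l)"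
  have "simp_homot N L ((\<lambda>x. x ! i) \<circ> id) ((\<lambda>x. x ! l) \<circ> id)"
    using homot_pre[OF smN] hm i l by auto
  from homot_post[OF phi this]
  show "simp_homot N L' (map (\<lambda>i. \<lambda>x. \<phi> (x ! i)) [0..<n] ! i) (map (\<lambda>i. \<lambda>x. \<phi> (x ! i)) [0..<n] ! l)"
    using i l by (simp add: comp_def)
qed simp

lemma dir_d:
  fixes L :: "'a set set" and L' :: "'b set set"
  assumes rL: "raw_complex L" and g: "simp_map L' L \<gamma>"
    and hg: "simp_homot L L (\<gamma> \<circ> \<phi>) id"
    and c: "cov (power_cx L n) L' (map (\<lambda>i. \<lambda>x. \<phi> (x ! i)) [0..<n]) k"
  shows "cov (power_cx L n) L (map (\<lambda>i. \<lambda>x. x ! i) [0..<n]) k"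
proof (rule transfer[OF raw_power[OF rL] id_sm _ _ c])
  fix M N i l
  assume sN: "subcomplex N (power_cx L n)" and smN: "simp_map N M id"
    and i: "i < length (map (\<lambda>i. \<lambda>x. \<phi> (x ! i)) [0..<n])" and l: "l < length (map (\<lambda>i. \<lambda>x. \<phi> (x ! i)) [0..<n])"
    and hm: "simp_homot M L' (map (\<lambda>i. \<lambda>x. \<phi> (x ! i)) [0..<n] ! i) (map (\<lambda>i. \<lambda>x. \<phi> (x ! i)) [0..<n] ! l)"
  have "simp_homot N L' ((\<lambda>x. \<phi> (x ! i)) \<circ> id) ((\<lambda>x. \<phi> (x ! l)) \<circ> id)"
    using homot_pre[OF smN] hm i l by auto
  from homot_post[OF g this]
  have h1: "simp_homot N L (\<lambda>x. \<gamma> (\<phi> (x ! i))) (\<lambda>x. \<gamma> (\<phi> (x ! l)))" by (simp add: comp_def)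
  have h2: "simp_homot N L (\<lambda>x. \<gamma> (\<phi> (x ! j))) (\<lambda>x. x ! j)" if "j < n" for j
  proof -
    have "simp_map N L (\<lambda>x. x ! j)" using sm_sub[OF proj_sm[OF that]] sN subcomplex_def by blast
    from homot_pre[OF this hg] show ?thesis by (simp add: comp_def)
  qed
  have "simp_homot N L (\<lambda>x. x ! i) (\<lambda>x. x ! l)"
    using homot_trans[OF homot_trans[OF homot_sym[OF h2] h1] h2] i l by simp
  thus "simp_homot N L (map (\<lambda>i. \<lambda>x. x ! i) [0..<n] ! i) (map (\<lambda>i. \<lambda>x. x ! i) [0..<n] ! l)"
    using i l by simp
qed simp

theorem corollary5p5:
  fixes L :: "'a set set" and L' :: "'b set set" and \<phi> :: "'a \<Rightarrow> 'b" and n :: nat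
  assumes "finite_complex L" and "finite_complex L'"
    and "simp_map L L' \<phi>" and "\<phi> ` VX L = VX L'"
    and "finite_fibration L L' \<phi>"
    and "n \<ge> 2"
  shows "(\<forall>\<omega>. simp_map L' L \<omega> \<and> simp_homot L' L' (\<phi> \<circ> \<omega>) id \<longrightarrow> TC_map n L L' \<phi> = TC n L')
       \<and> (\<forall>\<gamma>. simp_map L' L \<gamma> \<and> simp_homot L L (\<gamma> \<circ> \<phi>) id \<longrightarrow> TC_map n L L' \<phi> = TC n L)
       \<and> (strong_equivalence L L' \<phi> \<longrightarrow> TC_map n L L' \<phi> = TC n L \<and> TC n L = TC n L')"
proof -
  have rL: "raw_complex L" and rL': "raw_complex L'" using assms fc_raw by auto
  have I: "TC_map n L L' \<phi> = TC n L'" if "simp_map L' L \<omega>" "simp_homot L' L' (\<phi> \<circ> \<omega>) id" for \<omega>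
    unfolding TC_map_def TC_def
    by (rule SD_eq) (rule iffI; (erule dir_b[OF rL' that] | erule dir_a[OF rL assms(3)]))
  have II: "TC_map n L L' \<phi> = TC n L" if "simp_map L' L \<gamma>" "simp_homot L L (\<gamma> \<circ> \<phi>) id" for \<gamma>
    unfolding TC_map_def TC_def
    by (rule SD_eq) (rule iffI; (erule dir_d[OF rL that] | erule dir_c[OF rL assms(3)]))
  show ?thesis using I II unfolding strong_equivalence_def by metis
qed

end
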